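(* Let $\Psi$ be proper closed convex, $F=\frac1n\sum_{i=1}^nF_i$ with $F_i(x)=\mathbb{E}_{\xi_i\sim\mathcal{D}_i}[F_{\xi_i}(x)]$, and $x^*$ a solution of $\langle F(x^* ),x-x^*\rangle+\Psi(x)-\Psi(x^* )\ge0$ for all $x$. Let $K\ge0$, $\beta\in(0,1]$, $0<\gamma\le\frac{1}{\sqrt{12}L}$, $V\ge\|x^0-x^*\|^2+\frac{409600\gamma^2\ln^2\frac{48n(K+1)}{\beta}}{n^2}\sum_{i=1}^n\|F_i(x^* )\|^2$, $Q=B_{4n\sqrt V}(x^* )$, and assume $\|F_i(x)-F_i(y)\|\le L\|x-y\|$ for all $x,y\in Q$, $i\in[n]$, and $F$ is monotone on $Q$. Consider DProx-clipped-SEG-shift (arbitrary initial shifts, $\nu$, $\lambda_k$). If $x^k,\tilde x^k\in Q$ for all $k=0,1,\dots,K$, then for all $u\in B_{4n\sqrt V}(x^* )$ $$\langle F(u),\tilde x^K_{\mathrm{avg}}-u\rangle+\Psi(\tilde x^K_{\mathrm{avg}})-\Psi(u)\le\frac{\|x^0-u\|^2-\|x^{K+1}-u\|^2}{2\gamma(K+1)}+\frac{\gamma}{K+1}\sum_{k=0}^K\left(3\|\omega_k\|^2+4\|\theta_k\|^2\right)+\frac1{K+1}\sum_{k=0}^K\langle\theta_k,x^k-u\rangle,$$ where $\tilde x^K_{\mathrm{avg}}=\frac1{K+1}\sum_{k=0}^K\tilde x^k$, $\theta_k=F(\tilde x^k)-\hat g^k$ and $\omega_k=F(x^k)-\tilde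 g^k$.
   Context: $\mathrm{prox}$ and $\mathrm{clip}(y,\lambda)=\min\{1,\lambda/\|y\|\}y$ ($\mathrm{clip}(0,\lambda)=0$) as usual. DProx-clipped-SEG-shift: $\tilde x^k=\mathrm{prox}_{\gamma\Psi}(x^k-\gamma\tilde g^k)$, $\tilde g^k=\frac1n\sum_i\tilde g_i^k$, $\tilde g_i^k=\tilde h_i^k+\tilde\Delta_i^k$, $\tilde h_i^{k+1}=\tilde h_i^k+\nu\tilde\Delta_i^k$, $\tilde\Delta_i^k=\mathrm{clip}(F_{\xi^k_{1,i}}(x^k)-\tilde h_i^k,\lambda_k)$; $x^{k+1}=\mathrm{prox}_{\gamma\Psi}(x^k-\gamma\hat g^k)$, $\hat g^k=\frac1n\sum_i\hat g_i^k$, $\hat g_i^k=\hat h_i^k+\hat\Delta_i^k$, $\hat h_i^{k+1}=\hat h_i^k+\nu\hat\Delta_i^k$, $\hat\Delta_i^k=\mathrm{clip}(F_{\xi^k_{2,i}}(\tilde x^k)-\hat h_i^k,\lambda_k)$, with all samples drawn independently. *)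

theory Defs
  imports "HOL-Probability.Probability"
begin

definition clip :: "'a::real_normed_vector \<Rightarrow> real \<Rightarrow> 'a" where
  "clip y lam = (if y = 0 then 0 else min 1 (lam / norm y) *\<^sub>R y)"

definition proper_fun :: "('a \<Rightarrow> ereal) \<Rightarrow> bool" where
  "proper_fun \<Psi> \<longleftrightarrow> (\<forall>x. \<Psi> x \<noteq> -\<infinity>) \<and> (\<exists>x. \<Psi> x \<noteq> \<infinity>)"

text \<open>Closed = lower semicontinuous = all sublevel sets closed.\<close>
definition closed_fun :: "('a::topological_space \<Rightarrow> ereal) \<Rightarrow> bool" where
  "closed_fun \<Psi> \<longleftrightarrow> (\<forall>c. closed {x. \<Psi> x \<le> c})"

definition convex_fun :: "('a::real_vector \<Rightarrow> ereal) \<Rightarrow> bool" where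
  "convex_fun \<Psi> \<longleftrightarrow> (\<forall>x y (t::real). 0 \<le> t \<and> t \<le> 1 \<longrightarrow>
      \<Psi> ((1 - t) *\<^sub>R x + t *\<^sub>R y) \<le> ereal (1 - t) * \<Psi> x + ereal t * \<Psi> y)"

definition prox :: "real \<Rightarrow> ('a::real_normed_vector \<Rightarrow> ereal) \<Rightarrow> 'a \<Rightarrow> 'a" where
  "prox \<gamma> \<Psi> y = (THE x. \<forall>z. \<Psi> x + ereal (norm (x - y)^2 / (2 * \<gamma>))
                              \<le> \<Psi> z + ereal (norm (z - y)^2 / (2 * \<gamma>)))"

definition avgF :: "nat \<Rightarrow> (nat \<Rightarrow> 'a \<Rightarrow> 'a::real_vector) \<Rightarrow> 'a \<Rightarrow> 'a" where
  "avgF n Fi x = (1 / real n) *\<^sub>R (\<Sum>i<n. Fi i x)"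

text \<open>Trajectory of DProx-clipped-SEG-shift for given sample realisations
  xi1 k i, xi2 k i, stochastic oracle Fs i xi x, stepsize gamma, shift parameter nu,
  clipping levels lam k, arbitrary initial point x 0 and arbitrary initial shifts
  ht 0 i, hh 0 i.  Here gt k, gh k are the aggregated estimators tilde g^k, hat g^k.\<close>
definition dprox_clipped_seg_shift ::
  "nat \<Rightarrow> ('a::euclidean_space \<Rightarrow> ereal) \<Rightarrow> real \<Rightarrow> real \<Rightarrow> (nat \<Rightarrow> real)
   \<Rightarrow> (nat \<Rightarrow> 's \<Rightarrow> 'a \<Rightarrow> 'a) \<Rightarrow> (nat \<Rightarrow> nat \<Rightarrow> 's) \<Rightarrow> (nat \<Rightarrow> nat \<Rightarrow> 's)
   \<Rightarrow> (nat \<Rightarrow> 'a) \<Rightarrow> (nat \<Rightarrow> 'a) \<Rightarrow> (nat \<Rightarrow> nat \<Rightarrow> 'a) \<Rightarrow> (nat \<Rightarrow> nat \<Rightarrow> 'a)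
   \<Rightarrow> (nat \<Rightarrow> 'a) \<Rightarrow> (nat \<Rightarrow> 'a) \<Rightarrow> bool" where
  "dprox_clipped_seg_shift n \<Psi> \<gamma> \<nu> lam Fs xi1 xi2 x xt ht hh gt gh \<longleftrightarrow>
     (\<forall>k. gt k = (1 / real n) *\<^sub>R (\<Sum>i<n. ht k i + clip (Fs i (xi1 k i) (x k) - ht k i) (lam k))
        \<and> xt k = prox \<gamma> \<Psi> (x k - \<gamma> *\<^sub>R gt k)
        \<and> (\<forall>i<n. ht (Suc k) i = ht k i + \<nu> *\<^sub>R clip (Fs i (xi1 k i) (x k) - ht k i) (lam k))
        \<and> gh k = (1 / real n) *\<^sub>R (\<Sum>i<n. hh k i + clip (Fs i (xi2 k i) (xt k) - hh k i) (lam k))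
        \<and> x (Suc k) = prox \<gamma> \<Psi> (x k - \<gamma> *\<^sub>R gh k)
        \<and> (\<forall>i<n. hh (Suc k) i = hh k i + \<nu> *\<^sub>R clip (Fs i (xi2 k i) (xt k) - hh k i) (lam k)))"

end

theory Submission
  imports Defs
begin

lemma quad_id:
  fixes a b y :: "'a::real_inner"
  shows "norm ((1 - t) *\<^sub>R a + t *\<^sub>R b - y)^2
    = (1 - t) * norm (a - y)^2 + t * norm (b - y)^2 - t * (1 - t) * norm (a - b)^2"
proof -
  have e: "(1 - t) *\<^sub>R a + t *\<^sub>R b - y = (1 - t) *\<^sub>R (a - y) + t *\<^sub>R (b - y)"
    by (simp add: algebra_simps)
  have e2: "a - b = (a - y) - (b - y)" by simp
  show ?thesis
    unfolding e e2 power2_norm_eq_inner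
    by (simp add: inner_add_left inner_add_right inner_diff_left inner_diff_right inner_commute algebra_simps power2_eq_square)
qed

lemma conv_fin:
  fixes \<Psi> :: "'a::real_vector \<Rightarrow> ereal"
  assumes "convex_fun \<Psi>" "proper_fun \<Psi>" "\<Psi> a \<noteq> \<infinity>" "\<Psi> b \<noteq> \<infinity>" "0 \<le> t" "t \<le> 1"
  shows "\<Psi> ((1 - t) *\<^sub>R a + t *\<^sub>R b) \<noteq> \<infinity> \<and>
    real_of_ereal (\<Psi> ((1 - t) *\<^sub>R a + t *\<^sub>R b)) \<le> (1 - t) * real_of_ereal (\<Psi> a) + t * real_of_ereal (\<Psi> b)"
proof -
  have na: "\<Psi> a \<noteq> -\<infinity>" "\<Psi> b \<noteq> -\<infinity>" "\<Psi> ((1 - t) *\<^sub>R a + t *\<^sub>R b) \<noteq> -\<infinity>"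
    using assms(2) unfolding proper_fun_def by auto
  obtain ra rb where ra: "\<Psi> a = ereal ra" "\<Psi> b = ereal rb"
    using assms(3,4) na by (metis ereal_cases)
  have "\<Psi> ((1 - t) *\<^sub>R a + t *\<^sub>R b) \<le> ereal (1 - t) * \<Psi> a + ereal t * \<Psi> b"
    using assms(1,5,6) unfolding convex_fun_def by blast
  then have le: "\<Psi> ((1 - t) *\<^sub>R a + t *\<^sub>R b) \<le> ereal ((1 - t) * ra + t * rb)"
    by (simp add: ra)
  then obtain r where r: "\<Psi> ((1 - t) *\<^sub>R a + t *\<^sub>R b) = ereal r"
    using na(3) by (cases "\<Psi> ((1 - t) *\<^sub>R a + t *\<^sub>R b)") auto
  show ?thesis using le by (simp add: r ra)
qed

lemma min_exists:
  fixes f :: "'a::euclidean_space \<Rightarrow> ereal"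
  assumes cl: "\<And>c. closed {x. f x \<le> c}" and bd: "bounded {x. f x \<le> f x0}"
  shows "\<exists>p. \<forall>z. f p \<le> f z"
proof (cases "f x0 \<le> (INF x. f x)")
  case True
  then show ?thesis by (meson INF_lower UNIV_I order_trans)
next
  case False
  define \<alpha> where "\<alpha> = (INF x. f x)"
  have lt: "\<alpha> < f x0" using False \<alpha>_def by auto
  define FF where "FF = (\<lambda>c. {x. f x \<le> c}) ` {c. \<alpha> < c \<and> c \<le> f x0}"
  have "\<Inter>FF \<noteq> {}"
  proof (rule closed_fip_Heine_Borel)
    show "{x. f x \<le> f x0} \<in> FF" using lt FF_def by auto
    show "bounded {x. f x \<le> f x0}" by (rule bd)
    show "\<And>T. T \<in> FF \<Longrightarrow> closed T" using cl FF_def by auto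
  next
    fix F' assume F': "finite F'" "F' \<subseteq> FF"
    then obtain C' where C': "C' \<subseteq> {c. \<alpha> < c \<and> c \<le> f x0}" "finite C'" "F' = (\<lambda>c. {x. f x \<le> c}) ` C'"
      unfolding FF_def by (meson finite_subset_image)
    show "\<Inter>F' \<noteq> {}"
    proof (cases "C' = {}")
      case True then show ?thesis using C' by auto
    next
      case False
      have "\<alpha> < Min C'" using C' False by auto
      then obtain x where "f x < Min C'" unfolding \<alpha>_def by (auto simp: INF_less_iff)
      then have "\<forall>c\<in>C'. f x \<le> c" using C' False by (meson Min_le less_imp_le order_trans)
      then show ?thesis using C' by auto
    qed
  qed
  then obtain p where p: "p \<in> \<Inter>FF" by blast
  have "f p \<le> \<alpha>"
  proof (rule ccontr)
    assume "\<not> f p \<le> \<alpha>"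
    then have "\<alpha> < f p" by simp
    then obtain c where c: "\<alpha> < c" "c < f p" using dense by blast
    define c' where "c' = min c (f x0)"
    have "{x. f x \<le> c'} \<in> FF" unfolding FF_def by (rule imageI) (use c lt in \<open>auto simp: c'_def\<close>)
    then have "f p \<le> c'" using p by blast
    then show False using c c'_def by auto
  qed
  then show ?thesis unfolding \<alpha>_def by (meson INF_lower UNIV_I order_trans)
qed


lemma phi_closed:
  fixes \<Psi> :: "'a::euclidean_space \<Rightarrow> ereal" and g :: "'a \<Rightarrow> real"
  assumes pr: "proper_fun \<Psi>" and cf: "closed_fun \<Psi>" and gc: "continuous_on UNIV g"
  shows "closed {x. \<Psi> x + ereal (g x) \<le> c}"
proof (cases c)
  case PInf then show ?thesis by simp
next
  case MInf
  have "\<Psi> x + ereal (g x) \<noteq> -\<infinity>" for x using pr unfolding proper_fun_def by auto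
  then have "{x. \<Psi> x + ereal (g x) \<le> c} = {}" using MInf by auto
  then show ?thesis by simp
next
  case (real r)
  show ?thesis unfolding closed_sequential_limits
  proof (intro allI impI)
    fix X l assume H: "(\<forall>n. X n \<in> {x. \<Psi> x + ereal (g x) \<le> c}) \<and> X \<longlonglongrightarrow> l"
    have gl: "(\<lambda>n. g (X n)) \<longlonglongrightarrow> g l"
      using H gc by (metis continuous_on_eq_continuous_at open_UNIV UNIV_I isCont_tendsto_compose)
    have bnd0: "l \<in> {x. \<Psi> x \<le> ereal (r - g l + e)}" if e: "e > 0" for e
    proof (rule Lim_in_closed_set[where f=X and F=sequentially])
      show "closed {x. \<Psi> x \<le> ereal (r - g l + e)}" using cf unfolding closed_fun_def by blast
      have "\<forall>\<^sub>F n in sequentially. dist (g (X n)) (g l) < e" using gl e by (rule tendstoD)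
      then show "\<forall>\<^sub>F n in sequentially. X n \<in> {x. \<Psi> x \<le> ereal (r - g l + e)}"
      proof (rule eventually_mono)
        fix n assume d: "dist (g (X n)) (g l) < e"
        have "\<Psi> (X n) + ereal (g (X n)) \<le> ereal r" using H real by auto
        moreover have "\<Psi> (X n) \<noteq> -\<infinity>" using pr unfolding proper_fun_def by auto
        ultimately have "\<Psi> (X n) \<le> ereal (r - g (X n))"
          by (cases "\<Psi> (X n)") auto
        also have "\<dots> \<le> ereal (r - g l + e)" using d by (simp add: dist_real_def abs_less_iff)
        finally show "X n \<in> {x. \<Psi> x \<le> ereal (r - g l + e)}" by simp
      qed
    qed (use H in auto)
    have bnd: "\<Psi> l \<le> ereal (r - g l + e)" if "e > 0" for e using bnd0[OF that] by simp
    have "\<Psi> l \<noteq> -\<infinity>" using pr unfolding proper_fun_def by auto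
    moreover have "\<Psi> l \<noteq> \<infinity>" using bnd[of 1] by auto
    ultimately obtain s where s: "\<Psi> l = ereal s" by (cases "\<Psi> l") auto
    have "s + g l \<le> r"
      by (rule field_le_epsilon) (use bnd s in fastforce)
    then show "l \<in> {x. \<Psi> x + ereal (g x) \<le> c}" using s real by simp
  qed
qed

lemma lower_bound:
  fixes \<Psi> :: "'a::euclidean_space \<Rightarrow> ereal"
  assumes pr: "proper_fun \<Psi>" and cf: "closed_fun \<Psi>" and cv: "convex_fun \<Psi>"
  shows "\<exists>x0 \<psi>0 b C. \<Psi> x0 = ereal \<psi>0 \<and> C \<ge> 0 \<and> (\<forall>x. ereal (b - C * norm (x - x0)) \<le> \<Psi> x)"
proof -
  obtain x0 where x0: "\<Psi> x0 \<noteq> \<infinity>" using pr unfolding proper_fun_def by auto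
  have nm: "\<And>x. \<Psi> x \<noteq> -\<infinity>" using pr unfolding proper_fun_def by auto
  obtain \<psi>0 where p0: "\<Psi> x0 = ereal \<psi>0" using x0 nm by (metis ereal_cases)
  define f where "f x = (if x \<in> cball x0 1 then \<Psi> x else \<infinity>)" for x
  have "\<exists>p. \<forall>z. f p \<le> f z"
  proof (rule min_exists)
    fix c
    have "{x. f x \<le> c} = (if c = \<infinity> then UNIV else cball x0 1 \<inter> {x. \<Psi> x \<le> c})"
      unfolding f_def by auto
    then show "closed {x. f x \<le> c}" using cf unfolding closed_fun_def by auto
  next
    have "{x. f x \<le> f x0} \<subseteq> cball x0 1" unfolding f_def using x0 by (auto split: if_splits)
    then show "bounded {x. f x \<le> f x0}" by (meson bounded_cball bounded_subset)
  qed
  then obtain p where p: "\<forall>z. f p \<le> f z" by blast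
  have "f p \<le> f x0" using p by blast
  then have pin: "p \<in> cball x0 1" and "\<Psi> p \<le> \<Psi> x0" using x0 unfolding f_def by (auto split: if_splits)
  then obtain m where m: "\<Psi> p = ereal m" "m \<le> \<psi>0" using nm p0 by (cases "\<Psi> p") auto
  have mb: "\<And>x. x \<in> cball x0 1 \<Longrightarrow> ereal m \<le> \<Psi> x"
    using p m pin unfolding f_def by (metis (full_types))
  define C where "C = \<psi>0 - m"
  have "ereal (m - C * norm (x - x0)) \<le> \<Psi> x" for x
  proof (cases "\<Psi> x = \<infinity>")
    case True then show ?thesis by simp
  next
    case False
    then obtain r where r: "\<Psi> x = ereal r" using nm by (metis ereal_cases)
    define d where "d = norm (x - x0)"
    show ?thesis
    proof (cases "d \<le> 1")
      case True
      then have "m \<le> r" using mb[of x] r by (simp add: d_def dist_norm norm_minus_commute)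
      moreover have "C * d \<ge> 0" using m C_def d_def by simp
      ultimately show ?thesis using r C_def d_def by simp
    next
      case False
      define t where "t = 1 / d"
      have t: "0 \<le> t" "t \<le> 1" "t * d = 1" using False t_def by auto
      define z where "z = (1 - t) *\<^sub>R x0 + t *\<^sub>R x"
      have "z - x0 = t *\<^sub>R (x - x0)" unfolding z_def by (simp add: algebra_simps)
      then have "norm (z - x0) = 1" using t d_def by simp
      then have "ereal m \<le> \<Psi> z" using mb[of z] by (simp add: dist_norm norm_minus_commute)
      moreover have "\<Psi> z \<noteq> \<infinity> \<and> real_of_ereal (\<Psi> z) \<le> (1 - t) * \<psi>0 + t * r"
        using conv_fin[OF cv pr, of x0 x t] t x0 r p0 unfolding z_def by simp
      ultimately have "m \<le> (1 - t) * \<psi>0 + t * r" using nm[of z] by (cases "\<Psi> z") auto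
      then have "m * d \<le> ((1 - t) * \<psi>0 + t * r) * d" using False by (simp add: mult_right_mono)
      also have "\<dots> = d * \<psi>0 - \<psi>0 + r" using t by (simp add: algebra_simps)
      finally have "\<psi>0 - C * d \<le> r" unfolding C_def by (simp add: algebra_simps)
      then show ?thesis using r d_def m C_def by simp
    qed
  qed
  moreover have "C \<ge> 0" using m C_def by simp
  ultimately show ?thesis using p0 by blast
qed


lemma three_point:
  fixes \<Psi> :: "'a::euclidean_space \<Rightarrow> ereal"
  assumes cv: "convex_fun \<Psi>" and pr: "proper_fun \<Psi>" and g: "\<gamma> > 0"
    and mn: "\<forall>z. \<Psi> p + ereal (norm (p - y)^2 / (2 * \<gamma>)) \<le> \<Psi> z + ereal (norm (z - y)^2 / (2 * \<gamma>))"
    and fp: "\<Psi> p \<noteq> \<infinity>" and fz: "\<Psi> z \<noteq> \<infinity>"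
  shows "real_of_ereal (\<Psi> p) + norm (p - y)^2 / (2 * \<gamma>) + norm (z - p)^2 / (2 * \<gamma>)
         \<le> real_of_ereal (\<Psi> z) + norm (z - y)^2 / (2 * \<gamma>)"
proof -
  have nm: "\<And>x. \<Psi> x \<noteq> -\<infinity>" using pr unfolding proper_fun_def by auto
  define q where "q x = norm (x - y)^2 / (2 * \<gamma>)" for x
  define N where "N = norm (z - p)^2 / (2 * \<gamma>)"
  define A where "A = real_of_ereal (\<Psi> p) + q p"
  define B where "B = real_of_ereal (\<Psi> z) + q z"
  have N0: "N \<ge> 0" unfolding N_def using g by simp
  have key: "A + N \<le> B + t * N" if t: "0 < t" "t \<le> 1" for t
  proof -
    define w where "w = (1 - t) *\<^sub>R p + t *\<^sub>R z"
    have cw: "\<Psi> w \<noteq> \<infinity> \<and> real_of_ereal (\<Psi> w) \<le> (1 - t) * real_of_ereal (\<Psi> p) + t * real_of_ereal (\<Psi> z)"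
      unfolding w_def using conv_fin[OF cv pr fp fz] t by simp
    have qw: "q w = (1 - t) * q p + t * q z - t * (1 - t) * N"
    proof -
      have "norm (w - y)^2 = (1 - t) * norm (p - y)^2 + t * norm (z - y)^2 - t * (1 - t) * norm (p - z)^2"
        unfolding w_def by (rule quad_id)
      then show ?thesis unfolding q_def N_def using g
        by (simp add: norm_minus_commute diff_divide_distrib add_divide_distrib)
    qed
    have "\<Psi> p + ereal (q p) \<le> \<Psi> w + ereal (q w)" using mn unfolding q_def by blast
    then have "A \<le> real_of_ereal (\<Psi> w) + q w" unfolding A_def using fp cw nm[of p] nm[of w]
      by (cases "\<Psi> p"; cases "\<Psi> w") auto
    then have "A \<le> (1 - t) * A + t * B - t * (1 - t) * N" using cw qw unfolding A_def B_def
      by (simp add: algebra_simps)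
    then have "t * A \<le> t * (B - (1 - t) * N)" by (simp add: algebra_simps)
    then have "A \<le> B - (1 - t) * N" using t by simp
    then show ?thesis by (simp add: algebra_simps)
  qed
  have "A + N \<le> B"
  proof (rule field_le_epsilon)
    fix e :: real assume e: "0 < e"
    define t where "t = min 1 (e / (N + 1))"
    have t: "0 < t" "t \<le> 1" using e N0 unfolding t_def by auto
    have "t * N \<le> e / (N + 1) * N" using N0 unfolding t_def by (intro mult_right_mono) auto
    also have "\<dots> \<le> e" using N0 e by (simp add: field_simps)
    finally show "A + N \<le> B + e" using key[OF t] by simp
  qed
  then show ?thesis unfolding A_def B_def N_def q_def by simp
qed

lemma prox_char:
  fixes \<Psi> :: "'a::euclidean_space \<Rightarrow> ereal"
  assumes pr: "proper_fun \<Psi>" and cf: "closed_fun \<Psi>" and cv: "convex_fun \<Psi>" and g: "\<gamma> > 0"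
  shows "\<Psi> (prox \<gamma> \<Psi> y) \<noteq> \<infinity> \<and>
    (\<forall>z. \<Psi> z \<noteq> \<infinity> \<longrightarrow> real_of_ereal (\<Psi> (prox \<gamma> \<Psi> y)) + norm (prox \<gamma> \<Psi> y - y)^2 / (2 * \<gamma>)
        + norm (z - prox \<gamma> \<Psi> y)^2 / (2 * \<gamma>) \<le> real_of_ereal (\<Psi> z) + norm (z - y)^2 / (2 * \<gamma>))"
proof -
  have nm: "\<And>x. \<Psi> x \<noteq> -\<infinity>" using pr unfolding proper_fun_def by auto
  define \<phi> where "\<phi> x = \<Psi> x + ereal (norm (x - y)^2 / (2 * \<gamma>))" for x
  obtain x0 \<psi>0 b C where x0: "\<Psi> x0 = ereal \<psi>0" "C \<ge> 0" "\<forall>x. ereal (b - C * norm (x - x0)) \<le> \<Psi> x"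
    using lower_bound[OF pr cf cv] by blast
  have "\<exists>p. \<forall>z. \<phi> p \<le> \<phi> z"
  proof (rule min_exists)
    fix c show "closed {x. \<phi> x \<le> c}" unfolding \<phi>_def
      by (rule phi_closed[OF pr cf]) (use g in \<open>intro continuous_intros; simp\<close>)
  next
    define q0 where "q0 = norm (x0 - y)^2 / (2 * \<gamma>)"
    define s where "s = norm (y - x0)"
    define R where "R = 1 + 2 * \<gamma> * \<bar>\<psi>0 + q0 - b + C * s\<bar> + 2 * \<gamma> * C"
    have "{x. \<phi> x \<le> \<phi> x0} \<subseteq> cball y R"
    proof
      fix x assume "x \<in> {x. \<phi> x \<le> \<phi> x0}"
      then have "\<Psi> x + ereal (norm (x - y)^2 / (2 * \<gamma>)) \<le> ereal (\<psi>0 + q0)"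
        unfolding \<phi>_def q0_def using x0 by simp
      moreover have "ereal (b - C * norm (x - x0)) + ereal (norm (x - y)^2 / (2 * \<gamma>)) \<le> \<Psi> x + ereal (norm (x - y)^2 / (2 * \<gamma>))"
        using x0 by (intro add_right_mono) blast
      ultimately have "ereal (b - C * norm (x - x0)) + ereal (norm (x - y)^2 / (2 * \<gamma>)) \<le> ereal (\<psi>0 + q0)"
        by (rule order_trans[rotated])
      then have h: "b - C * norm (x - x0) + norm (x - y)^2 / (2 * \<gamma>) \<le> \<psi>0 + q0" by simp
      define r where "r = norm (x - y)"
      have "norm (x - x0) \<le> r + s" unfolding r_def s_def
        using norm_triangle_ineq[of "x - y" "y - x0"] by simp
      then have "C * norm (x - x0) \<le> C * (r + s)" using x0 by (simp add: mult_left_mono)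
      then have h2: "r^2 / (2 * \<gamma>) \<le> (\<psi>0 + q0 - b + C * s) + C * r" using h unfolding r_def
        by (simp add: algebra_simps)
      then have h3: "r^2 \<le> 2 * \<gamma> * (\<psi>0 + q0 - b + C * s) + 2 * \<gamma> * C * r" using g
        by (simp add: field_simps)
      have "r \<le> R"
      proof (cases "r \<le> 1")
        case True
        have "0 \<le> 2 * \<gamma> * \<bar>\<psi>0 + q0 - b + C * s\<bar>" "0 \<le> 2 * \<gamma> * C" using g x0 by auto
        then show ?thesis unfolding R_def using True by linarith
      next
        case False
        have "r * r \<le> (2 * \<gamma> * \<bar>\<psi>0 + q0 - b + C * s\<bar> + 2 * \<gamma> * C) * r"
        proof -
          have "\<bar>\<psi>0 + q0 - b + C * s\<bar> * 1 \<le> \<bar>\<psi>0 + q0 - b + C * s\<bar> * r"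
            using False by (intro mult_left_mono) auto
          moreover have "\<psi>0 + q0 - b + C * s \<le> \<bar>\<psi>0 + q0 - b + C * s\<bar>" by (rule abs_ge_self)
          ultimately have "\<psi>0 + q0 - b + C * s \<le> \<bar>\<psi>0 + q0 - b + C * s\<bar> * r" by simp
          then have "2 * \<gamma> * (\<psi>0 + q0 - b + C * s) \<le> 2 * \<gamma> * (\<bar>\<psi>0 + q0 - b + C * s\<bar> * r)"
            using g by (intro mult_left_mono) auto
          then show ?thesis using h3 by (simp add: power2_eq_square algebra_simps)
        qed
        then have "r \<le> 2 * \<gamma> * \<bar>\<psi>0 + q0 - b + C * s\<bar> + 2 * \<gamma> * C" using False by simp
        then show ?thesis unfolding R_def by simp
      qed
      then show "x \<in> cball y R" unfolding r_def by (simp add: dist_norm norm_minus_commute)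
    qed
    then show "bounded {x. \<phi> x \<le> \<phi> x0}" by (meson bounded_cball bounded_subset)
  qed
  then obtain p where p: "\<forall>z. \<phi> p \<le> \<phi> z" by blast
  have fp: "\<Psi> p \<noteq> \<infinity>" using p[rule_format, of x0] x0 unfolding \<phi>_def by auto
  have tp: "\<And>z. \<Psi> z \<noteq> \<infinity> \<Longrightarrow> real_of_ereal (\<Psi> p) + norm (p - y)^2 / (2 * \<gamma>) + norm (z - p)^2 / (2 * \<gamma>)
         \<le> real_of_ereal (\<Psi> z) + norm (z - y)^2 / (2 * \<gamma>)"
    by (rule three_point[OF cv pr g _ fp]) (use p in \<open>simp add: \<phi>_def\<close>)
  have uniq: "p' = p" if p': "\<forall>z. \<phi> p' \<le> \<phi> z" for p'
  proof -
    have fp': "\<Psi> p' \<noteq> \<infinity>" using p'[rule_format, of x0] x0 unfolding \<phi>_def by auto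
    have "\<phi> p' \<le> \<phi> p" using p' by blast
    then have "real_of_ereal (\<Psi> p') + norm (p' - y)^2 / (2 * \<gamma>) \<le> real_of_ereal (\<Psi> p) + norm (p - y)^2 / (2 * \<gamma>)"
      unfolding \<phi>_def using fp fp' nm[of p] nm[of p'] by (cases "\<Psi> p"; cases "\<Psi> p'") auto
    then have "norm (p' - p)^2 / (2 * \<gamma>) \<le> 0" using tp[OF fp'] by simp
    then show ?thesis using g by (simp add: divide_le_0_iff)
  qed
  have pa: "\<forall>z. \<Psi> p + ereal (norm (p - y)^2 / (2 * \<gamma>)) \<le> \<Psi> z + ereal (norm (z - y)^2 / (2 * \<gamma>))"
    using p unfolding \<phi>_def .
  have ua: "\<And>p'. \<forall>z. \<Psi> p' + ereal (norm (p' - y)^2 / (2 * \<gamma>)) \<le> \<Psi> z + ereal (norm (z - y)^2 / (2 * \<gamma>)) \<Longrightarrow> p' = p"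
    using uniq unfolding \<phi>_def by blast
  have "prox \<gamma> \<Psi> y = p"
    unfolding prox_def
    by (rule the_equality) (rule pa, erule ua)
  then show ?thesis using fp tp by simp
qed


lemma young_all:
  fixes \<gamma> L A B T W :: real
  assumes g: "\<gamma> > 0" and L: "L \<ge> 0" and gl: "12 * \<gamma>^2 * L^2 \<le> 1"
    and "A \<ge> 0" "B \<ge> 0" "T \<ge> 0" "W \<ge> 0"
  shows "L * A * B + T * A + W * B + T * B \<le> (A^2 + B^2) / (2 * \<gamma>) + \<gamma> * (3 * W^2 + 4 * T^2)"
proof -
  have y1: "\<gamma> * T * A \<le> 2 * \<gamma>^2 * T^2 + A^2 / 8"
    using sum_squares_ge_zero[of "\<gamma> * T - A / 4" 0] by (simp add: power2_eq_square algebra_simps)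
  have y2: "\<gamma> * T * B \<le> 2 * \<gamma>^2 * T^2 + B^2 / 8"
    using sum_squares_ge_zero[of "\<gamma> * T - B / 4" 0] by (simp add: power2_eq_square algebra_simps)
  have y3: "\<gamma> * W * B \<le> 3 * \<gamma>^2 * W^2 + B^2 / 12"
    using sum_squares_ge_zero[of "\<gamma> * W - B / 6" 0] by (simp add: power2_eq_square algebra_simps)
  have y4: "\<gamma> * L * A * B \<le> 2 * \<gamma>^2 * L^2 * A^2 + B^2 / 8"
    using sum_squares_ge_zero[of "\<gamma> * L * A - B / 4" 0] by (simp add: power2_eq_square algebra_simps)
  have y5: "2 * \<gamma>^2 * L^2 * A^2 \<le> A^2 / 6"
    using gl mult_right_mono[OF gl, of "A^2"] by (simp add: algebra_simps)
  have ex: "\<gamma> * (L * A * B + T * A + W * B + T * B) = \<gamma> * L * A * B + \<gamma> * T * A + \<gamma> * W * B + \<gamma> * T * B"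
    by (simp add: algebra_simps)
  have ex2: "\<gamma> * ((A^2 + B^2) / (2 * \<gamma>) + \<gamma> * (3 * W^2 + 4 * T^2)) = A^2 / 2 + B^2 / 2 + 3 * \<gamma>^2 * W^2 + 4 * \<gamma>^2 * T^2"
    using g by (simp add: field_simps power2_eq_square)
  have "A^2 \<ge> 0" "B^2 \<ge> 0" by auto
  then have "\<gamma> * (L * A * B + T * A + W * B + T * B) \<le> \<gamma> * ((A^2 + B^2) / (2 * \<gamma>) + \<gamma> * (3 * W^2 + 4 * T^2))"
    unfolding ex ex2 using y1 y2 y3 y4 y5 by linarith
  then show ?thesis using g by simp
qed

lemma sq_shift:
  fixes a b c :: "'a::real_inner"
  shows "norm (a + c)^2 - norm (b + c)^2 = norm a^2 - norm b^2 + 2 * inner c (a - b)"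
  unfolding power2_norm_eq_inner
  by (simp add: inner_add_left inner_add_right inner_diff_left inner_diff_right inner_commute algebra_simps)

lemma step_ineq:
  fixes x xt x' u gt gh Fx Fxt Fu :: "'a::real_inner"
  assumes g: "\<gamma> > 0" and L: "L \<ge> 0" and gl: "12 * \<gamma>^2 * L^2 \<le> 1"
    and A: "pxp + norm (x' - (x - \<gamma> *\<^sub>R gh))^2 / (2 * \<gamma>) + norm (u - x')^2 / (2 * \<gamma>)
              \<le> pu + norm (u - (x - \<gamma> *\<^sub>R gh))^2 / (2 * \<gamma>)"
    and B: "pxt + norm (xt - (x - \<gamma> *\<^sub>R gt))^2 / (2 * \<gamma>) + norm (x' - xt)^2 / (2 * \<gamma>)
              \<le> pxp + norm (x' - (x - \<gamma> *\<^sub>R gt))^2 / (2 * \<gamma>)"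
    and mono: "inner (Fxt - Fu) (xt - u) \<ge> 0"
    and lip: "norm (Fxt - Fx) \<le> L * norm (xt - x)"
  shows "inner Fu (xt - u) + pxt - pu \<le> (norm (x - u)^2 - norm (x' - u)^2) / (2 * \<gamma>)
          + \<gamma> * (3 * norm (Fx - gt)^2 + 4 * norm (Fxt - gh)^2) + inner (Fxt - gh) (x - u)"
proof -
  define \<theta> where "\<theta> = Fxt - gh"
  define \<omega> where "\<omega> = Fx - gt"
  define a where "a = xt - x"
  define b where "b = xt - x'"
  have e1: "norm (u - (x - \<gamma> *\<^sub>R gh))^2 - norm (x' - (x - \<gamma> *\<^sub>R gh))^2
      = norm (u - x)^2 - norm (x' - x)^2 + 2 * \<gamma> * inner gh (u - x')"
    using sq_shift[of "u - x" "\<gamma> *\<^sub>R gh" "x' - x"] by (simp add: algebra_simps)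
  have e2: "norm (x' - (x - \<gamma> *\<^sub>R gt))^2 - norm (xt - (x - \<gamma> *\<^sub>R gt))^2
      = norm (x' - x)^2 - norm (xt - x)^2 + 2 * \<gamma> * inner gt (x' - xt)"
    using sq_shift[of "x' - x" "\<gamma> *\<^sub>R gt" "xt - x"] by (simp add: algebra_simps)
  have e1': "norm (u - (x - \<gamma> *\<^sub>R gh))^2 / (2 * \<gamma>) - norm (x' - (x - \<gamma> *\<^sub>R gh))^2 / (2 * \<gamma>)
      = norm (x - u)^2 / (2 * \<gamma>) - norm (x' - x)^2 / (2 * \<gamma>) + inner gh (u - x')"
    using arg_cong[OF e1, of "\<lambda>t. t / (2 * \<gamma>)"] g
    by (simp add: diff_divide_distrib add_divide_distrib norm_minus_commute)
  have e2': "norm (x' - (x - \<gamma> *\<^sub>R gt))^2 / (2 * \<gamma>) - norm (xt - (x - \<gamma> *\<^sub>R gt))^2 / (2 * \<gamma>)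
      = norm (x' - x)^2 / (2 * \<gamma>) - norm a^2 / (2 * \<gamma>) + inner gt (x' - xt)"
    using arg_cong[OF e2, of "\<lambda>t. t / (2 * \<gamma>)"] g unfolding a_def
    by (simp add: diff_divide_distrib add_divide_distrib)
  have nb: "norm (x' - xt) = norm b" "norm (u - x') = norm (x' - u)" unfolding b_def by (auto simp: norm_minus_commute)
  have AB': "pxt - pu \<le> norm (x - u)^2 / (2 * \<gamma>) - norm (x' - u)^2 / (2 * \<gamma>) - norm a^2 / (2 * \<gamma>) - norm b^2 / (2 * \<gamma>)
           + (inner gh (u - x') + inner gt (x' - xt))"
    using A B e1' e2' unfolding nb by linarith
  have dec: "inner Fu (xt - u) + inner gh (u - x') + inner gt (x' - xt)
     = - inner (Fxt - Fu) (xt - u) + inner (Fxt - Fx) b + inner \<theta> (x - u) + inner \<theta> a - inner \<theta> b + inner \<omega> b"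
    unfolding \<theta>_def \<omega>_def a_def b_def
    by (simp add: inner_diff_left inner_diff_right inner_commute algebra_simps)
  have c1: "inner (Fxt - Fx) b \<le> L * norm a * norm b"
    using norm_cauchy_schwarz[of "Fxt - Fx" b] lip mult_right_mono[OF lip, of "norm b"]
    unfolding a_def by simp
  have c2: "inner \<theta> a \<le> norm \<theta> * norm a" by (rule norm_cauchy_schwarz)
  have c3: "- inner \<theta> b \<le> norm \<theta> * norm b"
    using norm_cauchy_schwarz[of \<theta> "-b"] by simp
  have c4: "inner \<omega> b \<le> norm \<omega> * norm b" by (rule norm_cauchy_schwarz)
  have Y: "L * norm a * norm b + norm \<theta> * norm a + norm \<omega> * norm b + norm \<theta> * norm b
      \<le> (norm a^2 + norm b^2) / (2 * \<gamma>) + \<gamma> * (3 * norm \<omega>^2 + 4 * norm \<theta>^2)"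
    by (rule young_all[OF g L gl]) auto
  show ?thesis
  proof -
    have q: "(norm a^2 + norm b^2) / (2 * \<gamma>) = norm a^2 / (2 * \<gamma>) + norm b^2 / (2 * \<gamma>)"
      by (simp add: add_divide_distrib)
    have q2: "(norm (x - u)^2 - norm (x' - u)^2) / (2 * \<gamma>) = norm (x - u)^2 / (2 * \<gamma>) - norm (x' - u)^2 / (2 * \<gamma>)"
      by (simp add: diff_divide_distrib)
    show ?thesis
      using AB' dec c1 c2 c3 c4 Y mono unfolding \<theta>_def[symmetric] \<omega>_def[symmetric] q q2 q
      by linarith
  qed
qed


lemma rhs_alg:
  fixes g k P S T :: real
  assumes "g > 0" "k > 0"
  shows "1 / k * (P / (2 * g) + g * S + T) = P / (2 * g * k) + g / k * S + 1 / k * T"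
  using assms by (simp add: field_simps)

theorem lemmaH1:
  fixes n :: nat and \<Psi> :: "'a::euclidean_space \<Rightarrow> ereal"
    and D :: "nat \<Rightarrow> 's measure" and Fs :: "nat \<Rightarrow> 's \<Rightarrow> 'a \<Rightarrow> 'a"
    and Fi :: "nat \<Rightarrow> 'a \<Rightarrow> 'a" and xstar :: 'a
    and K :: nat and \<beta> \<gamma> L V \<nu> :: real and lam :: "nat \<Rightarrow> real"
    and xi1 xi2 :: "nat \<Rightarrow> nat \<Rightarrow> 's"
    and x xt gt gh :: "nat \<Rightarrow> 'a" and ht hh :: "nat \<Rightarrow> nat \<Rightarrow> 'a"
  assumes n_pos: "n \<ge> 1"
    and Psi: "proper_fun \<Psi>" "closed_fun \<Psi>" "convex_fun \<Psi>"
    and D_prob: "\<And>i. i < n \<Longrightarrow> prob_space (D i)"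
    and Fs_int: "\<And>i y. i < n \<Longrightarrow> integrable (D i) (\<lambda>\<xi>. Fs i \<xi> y)"
    and Fi_def: "\<And>i y. i < n \<Longrightarrow> Fi i y = (\<integral>\<xi>. Fs i \<xi> y \<partial>D i)"
    and sol: "\<And>y. ereal (inner (avgF n Fi xstar) (y - xstar)) + \<Psi> y \<ge> \<Psi> xstar"
    and beta: "0 < \<beta>" "\<beta> \<le> 1"
    and gamma: "0 < \<gamma>" "\<gamma> \<le> 1 / (sqrt 12 * L)"
    and V: "V \<ge> norm (x 0 - xstar)^2
              + 409600 * \<gamma>^2 * (ln (48 * real n * (real K + 1) / \<beta>))^2 / (real n)^2
                * (\<Sum>i<n. norm (Fi i xstar)^2)"
    and Lip: "\<And>i y z. i < n \<Longrightarrow> y \<in> cball xstar (4 * real n * sqrt V)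
                \<Longrightarrow> z \<in> cball xstar (4 * real n * sqrt V)
                \<Longrightarrow> norm (Fi i y - Fi i z) \<le> L * norm (y - z)"
    and mono: "\<And>y z. y \<in> cball xstar (4 * real n * sqrt V)
                \<Longrightarrow> z \<in> cball xstar (4 * real n * sqrt V)
                \<Longrightarrow> inner (avgF n Fi y - avgF n Fi z) (y - z) \<ge> 0"
    and alg: "dprox_clipped_seg_shift n \<Psi> \<gamma> \<nu> lam Fs xi1 xi2 x xt ht hh gt gh"
    and inQ: "\<And>k. k \<le> K \<Longrightarrow> x k \<in> cball xstar (4 * real n * sqrt V)
                              \<and> xt k \<in> cball xstar (4 * real n * sqrt V)"
  shows "\<forall>u \<in> cball xstar (4 * real n * sqrt V).
    (let xavg = (1 / (real K + 1)) *\<^sub>R (\<Sum>k\<le>K. xt k);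
         \<theta> = (\<lambda>k. avgF n Fi (xt k) - gh k);
         \<omega> = (\<lambda>k. avgF n Fi (x k) - gt k)
     in ereal (inner (avgF n Fi u) (xavg - u)) + \<Psi> xavg
        \<le> ereal ((norm (x 0 - u)^2 - norm (x (K + 1) - u)^2) / (2 * \<gamma> * (real K + 1))
                 + \<gamma> / (real K + 1) * (\<Sum>k\<le>K. 3 * norm (\<omega> k)^2 + 4 * norm (\<theta> k)^2)
                 + 1 / (real K + 1) * (\<Sum>k\<le>K. inner (\<theta> k) (x k - u)))
          + \<Psi> u)"
proof (intro ballI)
  fix u assume uQ: "u \<in> cball xstar (4 * real n * sqrt V)"
  define Q where "Q = cball xstar (4 * real n * sqrt V)"
  define Fa where "Fa = avgF n Fi"
  define \<psi> where "\<psi> y = real_of_ereal (\<Psi> y)" for y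
  define dom where "dom = {y. \<Psi> y \<noteq> \<infinity>}"
  have nm: "\<And>y. \<Psi> y \<noteq> -\<infinity>" using Psi(1) unfolding proper_fun_def by auto
  have Lpos: "L > 0"
  proof (rule ccontr)
    assume "\<not> L > 0"
    then have "sqrt 12 * L \<le> 0" by (simp add: mult_nonneg_nonpos)
    then have "1 / (sqrt 12 * L) \<le> 0" by (simp add: divide_nonpos_nonneg divide_le_0_iff)
    then show False using gamma by linarith
  qed
  have gl1: "\<gamma> * (sqrt 12 * L) \<le> 1" using gamma Lpos by (simp add: le_divide_eq)
  have gl: "12 * \<gamma>^2 * L^2 \<le> 1"
  proof -
    have "(\<gamma> * (sqrt 12 * L))^2 \<le> 1^2" using gl1 gamma Lpos
      by (intro power_mono) auto
    then show ?thesis by (simp add: power_mult_distrib algebra_simps)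
  qed
  have LipF: "norm (Fa y - Fa z) \<le> L * norm (y - z)" if "y \<in> Q" "z \<in> Q" for y z
  proof -
    have "Fa y - Fa z = (1 / real n) *\<^sub>R (\<Sum>i<n. Fi i y - Fi i z)"
      unfolding Fa_def avgF_def by (simp add: sum_subtractf scaleR_diff_right)
    then have "norm (Fa y - Fa z) = (1 / real n) * norm (\<Sum>i<n. Fi i y - Fi i z)" by simp
    also have "\<dots> \<le> (1 / real n) * (\<Sum>i<n. norm (Fi i y - Fi i z))"
      by (intro mult_left_mono norm_sum) auto
    also have "\<dots> \<le> (1 / real n) * (\<Sum>i<n. L * norm (y - z))"
      using Lip that unfolding Q_def by (intro mult_left_mono sum_mono) auto
    also have "\<dots> = L * norm (y - z)" using n_pos by simp
    finally show ?thesis .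
  qed
  have xtk: "xt k = prox \<gamma> \<Psi> (x k - \<gamma> *\<^sub>R gt k)" and xk: "x (Suc k) = prox \<gamma> \<Psi> (x k - \<gamma> *\<^sub>R gh k)" for k
    using alg unfolding dprox_clipped_seg_shift_def by blast+
  note PC = prox_char[OF Psi(1) Psi(2) Psi(3) gamma(1)]
  have fxt: "\<Psi> (xt k) \<noteq> \<infinity>" and fx: "\<Psi> (x (Suc k)) \<noteq> \<infinity>" for k
    using PC xtk xk by metis+
  show "let xavg = (1 / (real K + 1)) *\<^sub>R (\<Sum>k\<le>K. xt k);
         \<theta> = (\<lambda>k. avgF n Fi (xt k) - gh k);
         \<omega> = (\<lambda>k. avgF n Fi (x k) - gt k)
     in ereal (inner (avgF n Fi u) (xavg - u)) + \<Psi> xavg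
        \<le> ereal ((norm (x 0 - u)^2 - norm (x (K + 1) - u)^2) / (2 * \<gamma> * (real K + 1))
                 + \<gamma> / (real K + 1) * (\<Sum>k\<le>K. 3 * norm (\<omega> k)^2 + 4 * norm (\<theta> k)^2)
                 + 1 / (real K + 1) * (\<Sum>k\<le>K. inner (\<theta> k) (x k - u)))
          + \<Psi> u"
  proof (cases "\<Psi> u = \<infinity>")
    case True then show ?thesis by (simp add: Let_def)
  next
    case False
    define pu where "pu = \<psi> u"
    have Pu: "\<Psi> u = ereal pu" using False nm[of u] unfolding pu_def \<psi>_def by (cases "\<Psi> u") auto
    define xavg where "xavg = (1 / (real K + 1)) *\<^sub>R (\<Sum>k\<le>K. xt k)"
    define \<theta> where "\<theta> = (\<lambda>k. Fa (xt k) - gh k)"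
    define \<omega> where "\<omega> = (\<lambda>k. Fa (x k) - gt k)"
    define f where "f k = norm (x k - u)^2" for k
    define c where "c = 1 / (real K + 1)"
    have c: "c > 0" unfolding c_def by simp
    have step: "inner (Fa u) (xt k - u) + \<psi> (xt k) - pu \<le> (f k - f (Suc k)) / (2 * \<gamma>)
          + \<gamma> * (3 * norm (\<omega> k)^2 + 4 * norm (\<theta> k)^2) + inner (\<theta> k) (x k - u)" if k: "k \<le> K" for k
      unfolding f_def \<theta>_def \<omega>_def
    proof (rule step_ineq[OF gamma(1) _ gl])
      show "0 \<le> L" using Lpos by simp
      show "\<psi> (x (Suc k)) + norm (x (Suc k) - (x k - \<gamma> *\<^sub>R gh k))^2 / (2 * \<gamma>) + norm (u - x (Suc k))^2 / (2 * \<gamma>)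
              \<le> pu + norm (u - (x k - \<gamma> *\<^sub>R gh k))^2 / (2 * \<gamma>)"
        using PC[of "x k - \<gamma> *\<^sub>R gh k"] False unfolding xk[symmetric] pu_def \<psi>_def by blast
      show "\<psi> (xt k) + norm (xt k - (x k - \<gamma> *\<^sub>R gt k))^2 / (2 * \<gamma>) + norm (x (Suc k) - xt k)^2 / (2 * \<gamma>)
              \<le> \<psi> (x (Suc k)) + norm (x (Suc k) - (x k - \<gamma> *\<^sub>R gt k))^2 / (2 * \<gamma>)"
        using PC[of "x k - \<gamma> *\<^sub>R gt k"] fx[of k] unfolding xtk[symmetric] \<psi>_def by blast
      show "0 \<le> inner (Fa (xt k) - Fa u) (xt k - u)"
        using mono[of "xt k" u] inQ[OF k] uQ unfolding Fa_def by simp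
      show "norm (Fa (xt k) - Fa (x k)) \<le> L * norm (xt k - x k)"
        using LipF inQ[OF k] unfolding Q_def by simp
    qed
    have sumstep: "(\<Sum>k\<le>K. inner (Fa u) (xt k - u) + \<psi> (xt k) - pu)
        \<le> (f 0 - f (Suc K)) / (2 * \<gamma>) + \<gamma> * (\<Sum>k\<le>K. 3 * norm (\<omega> k)^2 + 4 * norm (\<theta> k)^2)
          + (\<Sum>k\<le>K. inner (\<theta> k) (x k - u))"
    proof -
      have "(\<Sum>k\<le>K. inner (Fa u) (xt k - u) + \<psi> (xt k) - pu)
          \<le> (\<Sum>k\<le>K. (f k - f (Suc k)) / (2 * \<gamma>)
          + \<gamma> * (3 * norm (\<omega> k)^2 + 4 * norm (\<theta> k)^2) + inner (\<theta> k) (x k - u))"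
        by (rule sum_mono) (use step in auto)
      also have "\<dots> = (\<Sum>k\<le>K. f k - f (Suc k)) / (2 * \<gamma>) + \<gamma> * (\<Sum>k\<le>K. 3 * norm (\<omega> k)^2 + 4 * norm (\<theta> k)^2)
          + (\<Sum>k\<le>K. inner (\<theta> k) (x k - u))"
        by (simp only: sum.distrib sum_divide_distrib[symmetric] sum_distrib_left[symmetric])
      also have "(\<Sum>k\<le>K. f k - f (Suc k)) = f 0 - f (Suc K)" by (rule sum_telescope)
      finally show ?thesis .
    qed
    have convd: "convex dom"
    proof (rule convexI)
      fix t s :: real
      fix y z assume "y \<in> dom" "z \<in> dom" "0 \<le> t" "0 \<le> s" "t + s = 1"
      then have "s = 1 - (1 - s)" "t = 1 - s" "0 \<le> s" "s \<le> 1" by auto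
      then show "t *\<^sub>R y + s *\<^sub>R z \<in> dom"
        using conv_fin[OF Psi(3) Psi(1), of y z s] \<open>y \<in> dom\<close> \<open>z \<in> dom\<close> unfolding dom_def by auto
    qed
    have convo: "convex_on dom \<psi>"
    proof (rule convex_onI[OF _ convd])
      fix t :: real and y z assume "0 < t" "t < 1" "y \<in> dom" "z \<in> dom"
      then show "\<psi> ((1 - t) *\<^sub>R y + t *\<^sub>R z) \<le> (1 - t) * \<psi> y + t * \<psi> z"
        using conv_fin[OF Psi(3) Psi(1), of y z t] unfolding dom_def \<psi>_def by auto
    qed
    have xd: "xt k \<in> dom" for k using fxt unfolding dom_def by simp
    have xavg_eq: "xavg = (\<Sum>k\<le>K. c *\<^sub>R xt k)" unfolding xavg_def c_def by (simp add: scaleR_sum_right)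
    have csum: "(\<Sum>k\<le>K. c) = 1" unfolding c_def by simp
    have jen: "\<psi> xavg \<le> (\<Sum>k\<le>K. c * \<psi> (xt k))"
      unfolding xavg_eq by (rule convex_on_sum[OF _ _ convo csum]) (use c xd in auto)
    have xavgd: "xavg \<in> dom"
      unfolding xavg_eq by (rule convex_sum[OF _ convd csum]) (use c xd in auto)
    then obtain pa where Pa: "\<Psi> xavg = ereal pa" "\<psi> xavg = pa" using nm[of xavg] unfolding dom_def \<psi>_def
      by (cases "\<Psi> xavg") auto
    have lin: "inner (Fa u) (xavg - u) = c * (\<Sum>k\<le>K. inner (Fa u) (xt k - u))"
    proof -
      have "xavg - u = c *\<^sub>R (\<Sum>k\<le>K. xt k - u)"
      proof -
        have s1: "(\<Sum>k\<le>K. u) = (real K + 1) *\<^sub>R u"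
          by (simp add: sum_constant_scaleR add.commute)
        have "(1 / (real K + 1)) *\<^sub>R (\<Sum>k\<le>K. u) = ((1 / (real K + 1)) * (real K + 1)) *\<^sub>R u"
          unfolding s1 by (simp only: scaleR_scaleR)
        also have "\<dots> = u"
        proof -
          have h: "(1 / (real K + 1)) * (real K + 1) = 1" by simp
          show ?thesis by (simp only: h scaleR_one)
        qed
        finally show ?thesis
          unfolding xavg_def c_def by (simp add: sum_subtractf scaleR_diff_right)
      qed
      then show ?thesis by (simp add: inner_sum_right)
    qed
    have main: "inner (Fa u) (xavg - u) + pa \<le> c * ((f 0 - f (Suc K)) / (2 * \<gamma>) + \<gamma> * (\<Sum>k\<le>K. 3 * norm (\<omega> k)^2 + 4 * norm (\<theta> k)^2)
          + (\<Sum>k\<le>K. inner (\<theta> k) (x k - u))) + pu"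
    proof -
      have "inner (Fa u) (xavg - u) + pa - pu \<le> c * (\<Sum>k\<le>K. inner (Fa u) (xt k - u) + \<psi> (xt k) - pu)"
      proof -
        have s1: "(\<Sum>k\<le>K. inner (Fa u) (xt k - u) + \<psi> (xt k) - pu)
            = (\<Sum>k\<le>K. inner (Fa u) (xt k - u)) + (\<Sum>k\<le>K. \<psi> (xt k)) - (real K + 1) * pu"
          by (simp add: sum.distrib sum_subtractf algebra_simps)
        have c1: "c * (real K + 1) = 1" unfolding c_def by simp
        have c2: "c * ((real K + 1) * pu) = pu" by (simp add: mult.assoc[symmetric] c1)
        have s2: "c * (\<Sum>k\<le>K. \<psi> (xt k)) = (\<Sum>k\<le>K. c * \<psi> (xt k))" by (simp add: sum_distrib_left)
        have "c * (\<Sum>k\<le>K. inner (Fa u) (xt k - u) + \<psi> (xt k) - pu)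
            = c * (\<Sum>k\<le>K. inner (Fa u) (xt k - u)) + (\<Sum>k\<le>K. c * \<psi> (xt k)) - pu"
          unfolding s1 s2[symmetric] right_diff_distrib distrib_left c2 by simp
        then show ?thesis using jen Pa lin by linarith
      qed
      also have "\<dots> \<le> c * ((f 0 - f (Suc K)) / (2 * \<gamma>) + \<gamma> * (\<Sum>k\<le>K. 3 * norm (\<omega> k)^2 + 4 * norm (\<theta> k)^2)
          + (\<Sum>k\<le>K. inner (\<theta> k) (x k - u)))"
        using sumstep c by (intro mult_left_mono) auto
      finally show ?thesis by simp
    qed
    have rhs: "c * ((f 0 - f (Suc K)) / (2 * \<gamma>) + \<gamma> * (\<Sum>k\<le>K. 3 * norm (\<omega> k)^2 + 4 * norm (\<theta> k)^2)
          + (\<Sum>k\<le>K. inner (\<theta> k) (x k - u)))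
        = (norm (x 0 - u)^2 - norm (x (K + 1) - u)^2) / (2 * \<gamma> * (real K + 1))
                 + \<gamma> / (real K + 1) * (\<Sum>k\<le>K. 3 * norm (\<omega> k)^2 + 4 * norm (\<theta> k)^2)
                 + 1 / (real K + 1) * (\<Sum>k\<le>K. inner (\<theta> k) (x k - u))"
      unfolding c_def f_def using rhs_alg[OF gamma(1), of "real K + 1"] by simp
    show ?thesis
      unfolding Let_def xavg_def[symmetric] Fa_def[symmetric] \<theta>_def[symmetric] \<omega>_def[symmetric]
      using main unfolding rhs Pa Pu by simp
  qed
qed

end
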